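(* Let $N$ be the Newton map $z-F(z)/F'(z)$ of a transcendental entire function $F$, and suppose $N$ belongs to the class $\mathbf{R}_1$ and has exactly one pole in the strip $S_0=\{z:-\frac12<\operatorname{Re}z\le\frac12\}$, which is simple. Then $N$ is conjugate to either (i) the Newton map of $F_{\alpha,m}(z)=(e^{\alpha z}\sin\pi z)^m$ for some $\alpha\in\mathbb{C}\setminus\{\pm\pi i\}$ and $m\in\mathbb{N}^*$; or (ii) the Newton map of $F_\beta(z)=\exp\!\big(-\frac z\beta-\frac{1}{2\pi i\beta}e^{2\pi iz}\big)$ for some $\beta\in\mathbb{C}^*$.
   Context: $\mathbf{R}_1$ is the class of meromorphic functions $z+R(e^{2\pi iz})$ with $R$ a non-constant rational map with $R(0)\neq\infty$, $R(\infty)\neq\infty$ and $R^{-1}(\infty)\neq\emptyset$. *)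

theory Defs
  imports "HOL-Complex_Analysis.Complex_Analysis" "HOL-Computational_Algebra.Polynomial_Factorial"
begin

definition transcendental_entire :: "(complex \<Rightarrow> complex) \<Rightarrow> bool" where
  "transcendental_entire F \<longleftrightarrow> F holomorphic_on UNIV \<and> \<not> (\<exists>p. \<forall>z. F z = poly p z)"

text \<open>Newton map of F (as a function; meaningful as a meromorphic function
  away from the discrete zero set of the derivative).\<close>
definition newton_map :: "(complex \<Rightarrow> complex) \<Rightarrow> complex \<Rightarrow> complex" where
  "newton_map F = (\<lambda>z. z - F z / deriv F z)"

text \<open>Class R_1: N(z) = z + R(exp(2 pi i z)) with R = p/q a rational map in lowest terms,
  non-constant, R(0) finite, R(infinity) finite, and R has a pole in the finite plane.
  Equality of meromorphic functions is expressed as equality outside a discrete set.\<close>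
definition class_R1 :: "(complex \<Rightarrow> complex) \<Rightarrow> bool" where
  "class_R1 N \<longleftrightarrow> (\<exists>p q :: complex poly.
      q \<noteq> 0 \<and> coprime p q \<and>
      \<not> (\<exists>c. \<forall>w. poly q w \<noteq> 0 \<longrightarrow> poly p w = c * poly q w) \<and>
      poly q 0 \<noteq> 0 \<and>
      degree p \<le> degree q \<and>
      (\<exists>w. poly q w = 0) \<and>
      (\<forall>\<^sub>\<approx>z. N z = z + poly p (exp (2 * pi * \<i> * z)) / poly q (exp (2 * pi * \<i> * z))))"

definition strip_S0 :: "complex set" where
  "strip_S0 = {z. - 1/2 < Re z \<and> Re z \<le> 1/2}"

text \<open>Conformal conjugacy of meromorphic functions on C, i.e. by an affine automorphism
  phi(z) = a z + b, with equality of meromorphic functions (outside a discrete set).\<close>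
definition conformally_conjugate :: "(complex \<Rightarrow> complex) \<Rightarrow> (complex \<Rightarrow> complex) \<Rightarrow> bool" where
  "conformally_conjugate N M \<longleftrightarrow>
     (\<exists>a b. a \<noteq> 0 \<and> (\<forall>\<^sub>\<approx>z. N (a * z + b) = a * M z + b))"

definition F_alpha_m :: "complex \<Rightarrow> nat \<Rightarrow> complex \<Rightarrow> complex" where
  "F_alpha_m \<alpha> m = (\<lambda>z. (exp (\<alpha> * z) * sin (of_real pi * z)) ^ m)"

definition F_beta :: "complex \<Rightarrow> complex \<Rightarrow> complex" where
  "F_beta \<beta> = (\<lambda>z. exp (- z / \<beta> - exp (2 * pi * \<i> * z) / (2 * pi * \<i> * \<beta>)))"

end

theory Submission imports Defs "HOL-Computational_Algebra.Fundamental_Theorem_Algebra" begin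

abbreviation EE :: "complex \<Rightarrow> complex" where "EE z \<equiv> exp (2 * pi * \<i> * z)"
term "exp (2 * pi * \<i> * z)"
lemma deriv_Fbeta:
  assumes "\<beta> \<noteq> 0"
  shows "deriv (F_beta \<beta>) z = F_beta \<beta> z * (-(1 + exp (2 * pi * \<i> * z)) / \<beta>)"
proof -
  have "(F_beta \<beta> has_field_derivative F_beta \<beta> z * (-(1 + exp (2 * pi * \<i> * z)) / \<beta>)) (at z)"
    unfolding F_beta_def using assms
    by (auto intro!: derivative_eq_intros simp: field_simps)
  thus ?thesis by (rule DERIV_imp_deriv)
qed
lemma aux_div1: fixes x a b :: complex
  assumes "x \<noteq> 0" "b \<noteq> 0" shows "x / (x * (- a / b)) = - b / a"
  using assms by (cases "a = 0") (auto simp: field_simps)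

lemma newton_Fbeta:
  assumes "\<beta> \<noteq> 0"
  shows "newton_map (F_beta \<beta>) z = z + \<beta> / (1 + exp (2 * pi * \<i> * z))"
proof -
  have "F_beta \<beta> z \<noteq> 0" by (simp add: F_beta_def)
  hence "F_beta \<beta> z / (F_beta \<beta> z * (-(1 + exp (2 * pi * \<i> * z)) / \<beta>))
      = - \<beta> / (1 + exp (2 * pi * \<i> * z))" using assms
    by (rule aux_div1)
  thus ?thesis unfolding newton_map_def deriv_Fbeta[OF assms] by simp
qed

lemma deriv_Falpha:
  "deriv (F_alpha_m \<alpha> m) z = of_nat m * (exp (\<alpha> * z) * sin (of_real pi * z)) ^ (m - 1)
      * (exp (\<alpha> * z) * (\<alpha> * sin (of_real pi * z) + of_real pi * cos (of_real pi * z)))"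
proof -
  have "(F_alpha_m \<alpha> m has_field_derivative of_nat m * (exp (\<alpha> * z) * sin (of_real pi * z)) ^ (m - 1)
      * (exp (\<alpha> * z) * (\<alpha> * sin (of_real pi * z) + of_real pi * cos (of_real pi * z)))) (at z)"
  proof -
    have du: "((\<lambda>z. exp (\<alpha> * z) * sin (of_real pi * z)) has_field_derivative
       (exp (\<alpha> * z) * (\<alpha> * sin (of_real pi * z) + of_real pi * cos (of_real pi * z)))) (at z)"
      by (auto intro!: derivative_eq_intros simp: algebra_simps)
    show ?thesis unfolding F_alpha_m_def using DERIV_power[OF du, of m] by (simp add: mult_ac)
  qed
  thus ?thesis by (rule DERIV_imp_deriv)
qed

lemma aux_div2: fixes e s d :: complex
  assumes "m \<ge> 1" "e \<noteq> 0"
  shows "(e * s) ^ m / (of_nat m * (e * s) ^ (m - 1) * (e * d)) = s / (of_nat m * d)"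
proof (cases "s = 0")
  case True thus ?thesis using assms by simp
next
  case False
  obtain k where k: "m = Suc k" using assms by (cases m) auto
  have c: "(e * s) ^ (m - 1) \<noteq> 0" using False assms by simp
  have "(e * s) ^ m = (e * s) ^ (m - 1) * (e * s)" unfolding k by simp
  hence "(e * s) ^ m / (of_nat m * (e * s) ^ (m - 1) * (e * d))
      = ((e * s) ^ (m - 1) * (e * s)) / ((e * s) ^ (m - 1) * (of_nat m * e * d))"
    by (simp add: mult_ac)
  also have "\<dots> = (e * s) / (of_nat m * e * d)" using c by (rule mult_divide_mult_cancel_left)
  also have "\<dots> = s / (of_nat m * d)" using assms
    by (cases "d = 0") (auto simp: field_simps)
  finally show ?thesis .
qed

lemma aux_divk: fixes a b k :: complex
  assumes "k \<noteq> 0" shows "(a / k) / (b / k) = a / b"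
  using assms by (cases "b = 0") (auto simp: field_simps)

lemma aux_div3: fixes u M \<alpha> :: complex
  assumes "u \<noteq> 0"
  shows "((u - 1/u)/(2*\<i>)) / (M * (\<alpha> * ((u - 1/u)/(2*\<i>)) + of_real pi * ((u + 1/u)/2)))
     = (u^2 - 1) / (M * ((\<alpha> + of_real pi * \<i>) * u^2 + (of_real pi * \<i> - \<alpha>)))"
proof -
  have 1: "(u - 1/u)/(2*\<i>) = (u^2 - 1) / (2*\<i>*u)" using assms by (simp add: field_simps power2_eq_square)
  have 2: "M * (\<alpha> * ((u - 1/u)/(2*\<i>)) + of_real pi * ((u + 1/u)/2))
     = (M * ((\<alpha> + of_real pi * \<i>) * u^2 + (of_real pi * \<i> - \<alpha>))) / (2*\<i>*u)"
    using assms by (simp add: field_simps power2_eq_square)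
  have "2*\<i>*u \<noteq> 0" using assms by simp
  then show ?thesis unfolding 2 by (subst 1) (rule aux_divk)
qed

lemma newton_Falpha:
  assumes "m \<ge> 1"
  shows "newton_map (F_alpha_m \<alpha> m) z = z - (exp (2 * pi * \<i> * z) - 1) /
     (of_nat m * ((\<alpha> + of_real pi * \<i>) * exp (2 * pi * \<i> * z) + (of_real pi * \<i> - \<alpha>)))"
proof -
  define u where "u = exp (\<i> * (of_real pi * z))"
  have u0: "u \<noteq> 0" by (simp add: u_def)
  have s: "sin (of_real pi * z) = (u - 1/u)/(2*\<i>)"
    unfolding u_def sin_exp_eq by (simp add: exp_minus inverse_eq_divide)
  have c: "cos (of_real pi * z) = (u + 1/u)/2"
    unfolding u_def cos_exp_eq by (simp add: exp_minus inverse_eq_divide)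
  have E: "exp (2 * pi * \<i> * z) = u^2"
    unfolding u_def exp_double[symmetric] by (simp add: mult_ac)
  have "F_alpha_m \<alpha> m z / deriv (F_alpha_m \<alpha> m) z
      = sin (of_real pi * z) / (of_nat m * (\<alpha> * sin (of_real pi * z) + of_real pi * cos (of_real pi * z)))"
    unfolding deriv_Falpha by (simp only: F_alpha_m_def aux_div2[OF assms exp_not_eq_zero])
  also have "\<dots> = (u^2 - 1) / (of_nat m * ((\<alpha> + of_real pi * \<i>) * u^2 + (of_real pi * \<i> - \<alpha>)))"
    unfolding s c by (rule aux_div3[OF u0])
  finally show ?thesis unfolding newton_map_def E by simp
qed

lemma E_tendsto: "((\<lambda>z. exp (2 * pi * \<i> * z)) \<longlongrightarrow> exp (2 * pi * \<i> * z0)) (at z0)"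
  by (intro tendsto_intros)

lemma E_ev_neq: "\<forall>\<^sub>F z in at z0. exp (2 * pi * \<i> * z) \<noteq> w"
proof (cases "w = exp (2 * pi * \<i> * z0)")
  case False
  thus ?thesis using tendsto_imp_eventually_ne[OF E_tendsto] by metis
next
  case True
  have "\<forall>x. x \<noteq> z0 \<and> dist x z0 < 1 \<longrightarrow> exp (2 * pi * \<i> * x) \<noteq> w"
  proof (intro allI impI notI)
    fix x assume x: "x \<noteq> z0 \<and> dist x z0 < 1" and e: "exp (2 * pi * \<i> * x) = w"
    then obtain n :: int where n: "2 * pi * \<i> * x = 2 * pi * \<i> * z0 + (of_int (2 * n) * pi) * \<i>"
      using True exp_eq by metis
    hence "(2 * pi * \<i>) * x = (2 * pi * \<i>) * (z0 + of_int n)" by (simp add: algebra_simps)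
    hence "x = z0 + of_int n" by (subst (asm) mult_cancel_left) simp
    with x have "n \<noteq> 0" "norm (of_int n :: complex) < 1" by (auto simp: dist_norm)
    thus False by simp
  qed
  thus ?thesis unfolding eventually_at by (intro exI[of _ 1]) auto
qed

lemma poly_E_ev_neq:
  assumes "q \<noteq> 0"
  shows "\<forall>\<^sub>F z in at z0. poly q (exp (2 * pi * \<i> * z)) \<noteq> 0"
proof -
  have fin: "finite {w. poly q w = 0}" using assms by (rule poly_roots_finite)
  have "\<forall>\<^sub>F z in at z0. \<forall>w\<in>{w. poly q w = 0}. exp (2 * pi * \<i> * z) \<noteq> w"
    by (rule eventually_ball_finite[OF fin]) (use E_ev_neq in blast)
  thus ?thesis by eventually_elim auto
qed

lemma pole_lemma:
  assumes "q \<noteq> 0" "poly q (exp (2 * pi * \<i> * z0)) = 0" "poly p (exp (2 * pi * \<i> * z0)) \<noteq> 0"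
  shows "is_pole (\<lambda>z. z + poly p (exp (2 * pi * \<i> * z)) / poly q (exp (2 * pi * \<i> * z))) z0"
proof -
  have 1: "((\<lambda>z. poly p (exp (2 * pi * \<i> * z))) \<longlongrightarrow> poly p (exp (2 * pi * \<i> * z0))) (at z0)"
    by (intro tendsto_intros)
  have 2: "((\<lambda>z. poly q (exp (2 * pi * \<i> * z))) \<longlongrightarrow> 0) (at z0)"
  proof -
    have "((\<lambda>z. poly q (exp (2 * pi * \<i> * z))) \<longlongrightarrow> poly q (exp (2 * pi * \<i> * z0))) (at z0)"
      by (intro tendsto_intros)
    thus ?thesis using assms(2) by simp
  qed
  have 3: "filterlim (\<lambda>z. poly q (exp (2 * pi * \<i> * z))) (at 0) (at z0)"
    by (rule filterlim_atI[OF 2 poly_E_ev_neq[OF assms(1)]])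
  show ?thesis unfolding is_pole_def
    by (rule tendsto_add_filterlim_at_infinity[OF tendsto_ident_at filterlim_divide_at_infinity[OF 1 3 assms(3)]])
qed

lemma cosparse_affine:
  fixes a b :: complex
  assumes "a \<noteq> 0" "\<forall>\<^sub>\<approx>x. P x"
  shows "\<forall>\<^sub>\<approx>z. P (a * z + b)"
proof -
  have ev: "\<forall>x. eventually P (at x)" using assms(2) by (simp add: eventually_cosparse_open_eq)
  have "eventually (\<lambda>z. P (a * z + b)) (at x)" for x
  proof -
    have t: "((\<lambda>z. a * z + b) \<longlongrightarrow> a * x + b) (at x)" by (intro tendsto_intros)
    have "\<forall>\<^sub>F z in at x. a * z + b \<noteq> a * x + b" using assms(1) by (auto simp: eventually_at_filter)
    hence "filterlim (\<lambda>z. a * z + b) (at (a * x + b)) (at x)" by (rule filterlim_atI[OF t])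
    thus ?thesis using ev by (simp add: eventually_filtermap filterlim_def le_filter_def)
  qed
  thus ?thesis by (simp add: eventually_cosparse_open_eq)
qed

lemma E_quot_tendsto:
  "((\<lambda>z. (z - z1) / (exp (2 * pi * \<i> * z) - exp (2 * pi * \<i> * z1))) \<longlongrightarrow>
      1 / (2 * pi * \<i> * exp (2 * pi * \<i> * z1))) (at z1)"
proof -
  have d: "((\<lambda>z. exp (2 * pi * \<i> * z)) has_field_derivative (2 * pi * \<i> * exp (2 * pi * \<i> * z1))) (at z1)"
    by (auto intro!: derivative_eq_intros)
  hence "((\<lambda>z. (exp (2 * pi * \<i> * z) - exp (2 * pi * \<i> * z1)) / (z - z1)) \<longlongrightarrow> 2 * pi * \<i> * exp (2 * pi * \<i> * z1)) (at z1)"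
    by (simp add: has_field_derivative_iff)
  hence "((\<lambda>z. inverse ((exp (2 * pi * \<i> * z) - exp (2 * pi * \<i> * z1)) / (z - z1))) \<longlongrightarrow> inverse (2 * pi * \<i> * exp (2 * pi * \<i> * z1))) (at z1)"
    by (rule tendsto_inverse) simp
  thus ?thesis by (simp add: inverse_eq_divide)
qed

lemma logderiv_aux: fixes g g' X :: complex
  assumes "g \<noteq> 0" "X \<noteq> 0"
  shows "X * (g' * X ^ k + g * (of_nat k * X ^ (k - 1))) / (g * X ^ k) = X * g' / g + of_nat k"
proof (cases k)
  case 0 thus ?thesis using assms by (simp add: field_simps)
next
  case (Suc j) thus ?thesis using assms by (simp add: field_simps)
qed

lemma log_deriv_limit:
  fixes F :: "complex \<Rightarrow> complex"
  assumes holo: "F holomorphic_on UNIV" and nz: "\<exists>w. F w \<noteq> 0"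
  shows "\<exists>n::nat. ((\<lambda>z. (z - z1) * deriv F z / F z) \<longlongrightarrow> of_nat n) (at z1)"
proof -
  obtain r g where r: "r > 0" and gh: "g holomorphic_on cball z1 r"
    and fg: "\<forall>w\<in>cball z1 r. F w = g w * (w - z1) ^ nat (zorder F z1) \<and> g w \<noteq> 0"
    using zorder_exist_zero[OF holo open_UNIV connected_UNIV UNIV_I] nz by blast
  define k where "k = nat (zorder F z1)"
  have ghb: "g holomorphic_on ball z1 r" using gh by (rule holomorphic_on_subset) auto
  have dF: "deriv F w = deriv g w * (w - z1) ^ k + g w * (of_nat k * (w - z1) ^ (k - 1))"
    if w: "w \<in> ball z1 r" for w
  proof -
    have "((\<lambda>w. g w * (w - z1) ^ k) has_field_derivative
        deriv g w * (w - z1) ^ k + g w * (of_nat k * (w - z1) ^ (k - 1))) (at w)"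
      using holomorphic_derivI[OF ghb open_ball w]
      by (auto intro!: derivative_eq_intros)
    hence "(F has_field_derivative
        deriv g w * (w - z1) ^ k + g w * (of_nat k * (w - z1) ^ (k - 1))) (at w)"
      by (rule has_field_derivative_transform_within_open[OF _ open_ball w]) (use fg k_def in auto)
    thus ?thesis by (rule DERIV_imp_deriv)
  qed
  have ev: "\<forall>\<^sub>F w in at z1. (w - z1) * deriv g w / g w + of_nat k = (w - z1) * deriv F w / F w"
  proof (rule eventually_mono[OF eventually_conj[OF eventually_at_in_open'[OF open_ball] eventually_neq_at_within[of z1 z1 UNIV]]])
    show "z1 \<in> ball z1 r" using r by simp
  next
    fix w assume w: "w \<in> ball z1 r \<and> w \<noteq> z1"
    hence "F w = g w * (w - z1) ^ k" "g w \<noteq> 0" using fg k_def by auto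
    thus "(w - z1) * deriv g w / g w + of_nat k = (w - z1) * deriv F w / F w"
      unfolding dF[OF conjunct1[OF w]] using logderiv_aux w by simp
  qed
  have cg: "isCont g z1"
    using holomorphic_on_imp_continuous_on[OF ghb] r by (simp add: continuous_on_eq_continuous_at)
  have cdg: "isCont (deriv g) z1"
    using holomorphic_on_imp_continuous_on[OF holomorphic_deriv[OF ghb open_ball]] r
    by (simp add: continuous_on_eq_continuous_at)
  have "g z1 \<noteq> 0" using fg r by auto
  hence "isCont (\<lambda>w. (w - z1) * deriv g w / g w + of_nat k) z1"
    using cg cdg by (intro continuous_intros) auto
  hence "((\<lambda>w. (w - z1) * deriv g w / g w + of_nat k) \<longlongrightarrow> of_nat k) (at z1)"
    by (simp add: isCont_def)
  hence "((\<lambda>w. (w - z1) * deriv F w / F w) \<longlongrightarrow> of_nat k) (at z1)"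
    using tendsto_cong[OF ev] by simp
  thus ?thesis by blast
qed

lemma poly_single_root:
  fixes q :: "complex poly"
  assumes q0: "q \<noteq> 0" and r0: "poly q w0 = 0" and only: "\<forall>w. poly q w = 0 \<longrightarrow> w = w0"
  shows "\<exists>c k. c \<noteq> 0 \<and> k \<ge> 1 \<and> q = smult c ([:-w0,1:]^k)"
proof -
  obtain r where qr: "q = [:-w0,1:] ^ order w0 q * r" and nd: "\<not> [:-w0,1:] dvd r"
    using order_decomp[OF q0] by blast
  have "\<not> (\<exists>z. poly r z = 0)"
  proof
    assume "\<exists>z. poly r z = 0"
    then obtain z where z: "poly r z = 0" by blast
    hence "poly q z = 0" by (subst qr) simp
    hence "z = w0" using only by blast
    thus False using z nd by (simp add: poly_eq_0_iff_dvd)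
  qed
  hence "constant (poly r)" using Fundamental_Theorem_Algebra.fundamental_theorem_of_algebra by blast
  hence "degree r = 0" by (simp add: constant_degree)
  then obtain c where c: "r = [:c:]" by (rule degree_eq_zeroE)
  have qc: "q = smult c ([:-w0,1:] ^ order w0 q)" using qr c by simp
  have "c \<noteq> 0" using q0 qc by auto
  moreover have "order w0 q \<ge> 1"
  proof (rule ccontr)
    assume "\<not> order w0 q \<ge> 1"
    hence "order w0 q = 0" by simp
    hence "poly q w0 = c" using qc by simp
    thus False using r0 \<open>c \<noteq> 0\<close> by simp
  qed
  ultimately show ?thesis using qc by blast
qed

lemma coprime_root:
  fixes p q :: "complex poly"
  assumes "coprime p q" "poly q w = 0"
  shows "poly p w \<noteq> 0"
proof
  assume "poly p w = 0"
  hence "is_unit [:-w,1:]" using assms coprime_common_divisor by (metis poly_eq_0_iff_dvd)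
  thus False by (simp add: is_unit_iff_degree)
qed

lemma poly_deg1:
  fixes p :: "complex poly"
  assumes "degree p \<le> 1"
  shows "poly p x = coeff p 0 + coeff p 1 * x"
proof (cases "degree p = 0")
  case True
  then obtain a where "p = [:a:]" by (rule degree_eq_zeroE)
  thus ?thesis by simp
next
  case False
  hence d: "degree p = 1" using assms by simp
  show ?thesis unfolding poly_altdef d by (simp add: mult_ac)
qed

lemma aux_k: fixes X c z z0 P :: complex
  assumes "X \<noteq> 0" "c \<noteq> 0"
  shows "(z - z0) * z + (z - z0) / X * (P / (c * X ^ j)) = (z - z0) * (z + P / (c * X ^ Suc j))"
  using assms by (simp add: field_simps)

lemma simple_pole_k1:
  fixes c w0 z0 :: complex and p :: "complex poly"
  assumes c0: "c \<noteq> 0" and k1: "k \<ge> 1" and pw0: "poly p w0 \<noteq> 0"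
    and Ez0: "exp (2 * pi * \<i> * z0) = w0"
    and zo: "zorder (\<lambda>z. z + poly p (exp (2 * pi * \<i> * z)) / (c * (exp (2 * pi * \<i> * z) - w0) ^ k)) z0 = -1"
    and pole: "is_pole (\<lambda>z. z + poly p (exp (2 * pi * \<i> * z)) / (c * (exp (2 * pi * \<i> * z) - w0) ^ k)) z0"
  shows "k = 1"
proof (rule ccontr)
  assume "k \<noteq> 1"
  hence k2: "k \<ge> 2" using k1 by simp
  define E where "E = (\<lambda>z::complex. exp (2 * pi * \<i> * z))"
  define N2 where "N2 = (\<lambda>z. z + poly p (E z) / (c * (E z - w0) ^ k))"
  have ev: "\<forall>\<^sub>F z in at z0. E z \<noteq> w0" unfolding E_def by (rule E_ev_neq)
  then obtain d where d: "d > 0" and dE: "\<And>x. x \<noteq> z0 \<Longrightarrow> dist x z0 < d \<Longrightarrow> E x \<noteq> w0"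
    unfolding eventually_at by auto
  have holo: "N2 holomorphic_on ball z0 d - {z0}"
    unfolding N2_def E_def
    using dE c0 unfolding E_def
    by (auto intro!: holomorphic_intros poly_holomorphic_on simp: dist_commute)
  have pole': "is_pole N2 z0" using pole unfolding N2_def E_def .
  have zo': "zorder N2 z0 = -1" using zo unfolding N2_def E_def .
  obtain r where r: "r > 0" "cball z0 r \<subseteq> ball z0 d"
    and gh: "zor_poly N2 z0 holomorphic_on cball z0 r"
    and eq: "\<forall>w\<in>cball z0 r - {z0}. N2 w = zor_poly N2 z0 w / (w - z0) ^ nat (- zorder N2 z0)"
    using zorder_exist_pole[OF holo open_ball _ pole'] d by auto
  define g where "g = zor_poly N2 z0"
  have ghb: "g holomorphic_on ball z0 r" using gh unfolding g_def by (rule holomorphic_on_subset) auto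
  have cg: "isCont g z0"
    using holomorphic_on_imp_continuous_on[OF ghb] r by (simp add: continuous_on_eq_continuous_at)
  have ev2: "\<forall>\<^sub>F w in at z0. g w = (w - z0) * N2 w"
  proof (rule eventually_mono[OF eventually_conj[OF eventually_at_in_open'[OF open_ball] eventually_neq_at_within[of z0 z0 UNIV]]])
    show "z0 \<in> ball z0 r" using r by simp
  next
    fix w assume w: "w \<in> ball z0 r \<and> w \<noteq> z0"
    hence "N2 w = g w / (w - z0)" using eq zo' unfolding g_def by auto
    thus "g w = (w - z0) * N2 w" using w by simp
  qed
  have t1: "((\<lambda>w. (w - z0) * N2 w) \<longlongrightarrow> g z0) (at z0)"
    using cg tendsto_cong[OF ev2] by (simp add: isCont_def)
  have q1: "((\<lambda>z. (z - z0) / (E z - w0)) \<longlongrightarrow> 1 / (2 * pi * \<i> * w0)) (at z0)"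
    using E_quot_tendsto[of z0] unfolding E_def Ez0 .
  have w0nz: "w0 \<noteq> 0" using Ez0 by auto
  have tp: "((\<lambda>z. poly p (E z)) \<longlongrightarrow> poly p w0) (at z0)"
    unfolding E_def Ez0[symmetric] by (intro tendsto_intros)
  have tden: "((\<lambda>z. c * (E z - w0) ^ (k - 1)) \<longlongrightarrow> 0) (at z0)"
  proof -
    have "((\<lambda>z. c * (E z - w0) ^ (k - 1)) \<longlongrightarrow> c * (E z0 - w0) ^ (k - 1)) (at z0)"
      unfolding E_def by (intro tendsto_intros)
    moreover have "(0::complex) ^ (k - 1) = 0" using k2 by simp
    ultimately show ?thesis using Ez0 unfolding E_def by (metis diff_self mult_zero_right)
  qed
  have fden: "filterlim (\<lambda>z. c * (E z - w0) ^ (k - 1)) (at 0) (at z0)"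
    by (rule filterlim_atI[OF tden]) (use ev in \<open>eventually_elim, use c0 in simp\<close>)
  have f1: "filterlim (\<lambda>z. poly p (E z) / (c * (E z - w0) ^ (k - 1))) at_infinity (at z0)"
    by (rule filterlim_divide_at_infinity[OF tp fden pw0])
  have f2: "filterlim (\<lambda>z. (z - z0) / (E z - w0) * (poly p (E z) / (c * (E z - w0) ^ (k - 1)))) at_infinity (at z0)"
    by (rule tendsto_mult_filterlim_at_infinity[OF q1 _ f1]) (use w0nz in simp)
  have t0: "((\<lambda>z. (z - z0) * z) \<longlongrightarrow> 0) (at z0)"
  proof -
    have "((\<lambda>z. (z - z0) * z) \<longlongrightarrow> (z0 - z0) * z0) (at z0)" by (intro tendsto_intros)
    thus ?thesis by simp
  qed
  have f3: "filterlim (\<lambda>z. (z - z0) * z + (z - z0) / (E z - w0) * (poly p (E z) / (c * (E z - w0) ^ (k - 1)))) at_infinity (at z0)"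
    by (rule tendsto_add_filterlim_at_infinity[OF t0 f2])
  have ev3: "\<forall>\<^sub>F z in at z0. (z - z0) * z + (z - z0) / (E z - w0) * (poly p (E z) / (c * (E z - w0) ^ (k - 1)))
      = (z - z0) * N2 z"
    using ev
  proof eventually_elim
    case (elim z)
    obtain j where j: "k = Suc j" using k1 by (cases k) auto
    show ?case using aux_k[of "E z - w0" c z z0 "poly p (E z)" j] elim c0 unfolding N2_def j by simp
  qed
  have "filterlim (\<lambda>z. (z - z0) * N2 z) at_infinity (at z0)"
    using filterlim_cong[OF refl refl ev3] f3 by simp
  thus False using not_tendsto_and_filterlim_at_infinity[OF at_neq_bot t1] by simp
qed

lemma alg_b1: fixes a0 c w0 w :: complex
  assumes "c \<noteq> 0" "w0 \<noteq> 0"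
  shows "a0 / (c * (w * (- w0) - w0)) = (- a0 / (c * w0)) / (1 + w)"
proof -
  have d: "c * (w * (- w0) - w0) = - ((c * w0) * (1 + w))" by (simp add: algebra_simps)
  show ?thesis unfolding d by (simp add: divide_divide_eq_left)
qed

lemma alg_b2: fixes a1 c w0 w :: complex
  assumes "c \<noteq> 0" "w0 \<noteq> 0" "w \<noteq> 0"
  shows "a1 * (- w0 / w) / (c * (- w0 / w - w0)) = - ((- a1 / c) / (1 + w))"
proof -
  have n: "a1 * (- w0 / w) = (a1 * (- w0)) / w" by simp
  have d: "c * (- w0 / w - w0) = (c * (- w0) * (1 + w)) / w" using assms by (simp add: field_simps)
  have "a1 * (- w0 / w) / (c * (- w0 / w - w0)) = (a1 * (- w0)) / (c * (- w0) * (1 + w))"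
    unfolding n d by (rule aux_divk) (use assms in simp)
  also have "\<dots> = ((- w0) * a1) / ((- w0) * (c * (1 + w)))" by (simp add: mult_ac)
  also have "\<dots> = a1 / (c * (1 + w))" using assms by (subst mult_divide_mult_cancel_left) auto
  finally show ?thesis by (simp add: divide_divide_eq_left)
qed

lemma aux_q: fixes X c A a1 B :: complex
  assumes "a1 \<noteq> 0" "B \<noteq> 0"
  shows "X * (- (c * A) / (a1 * B)) = - (c / a1) * A * (X / B)"
  using assms by (simp add: field_simps)

lemma alg_i:
  fixes a1 c w0 w1 M w :: complex
  assumes a1: "a1 \<noteq> 0" and c: "c \<noteq> 0" and w1: "w1 \<noteq> 0" and M: "M \<noteq> 0"
    and hM: "M = - (c / a1) * (w1 - w0) * (1 / (2 * pi * \<i> * w1))"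
  defines "\<alpha> \<equiv> - c / (a1 * M) - of_real pi * \<i>"
  shows "(- a1 * w1 + a1 * (w * w1)) / (c * (w * w1 - w0))
       = - ((w - 1) / (M * ((\<alpha> + of_real pi * \<i>) * w + (of_real pi * \<i> - \<alpha>))))"
    and "\<alpha> \<noteq> of_real pi * \<i> \<or> w0 = 0" and "\<alpha> \<noteq> - (of_real pi * \<i>)"
proof -
  have pi0: "(of_real pi :: complex) \<noteq> 0" by simp
  have h2: "2 * of_real pi * \<i> * M = - (c / a1) * (w1 - w0) / w1"
    using hM pi0 w1 a1 by (simp add: field_simps)
  have D: "M * ((\<alpha> + of_real pi * \<i>) * w + (of_real pi * \<i> - \<alpha>)) = - (c / (a1 * w1)) * (w * w1 - w0)"
  proof -
    have "M * ((\<alpha> + of_real pi * \<i>) * w + (of_real pi * \<i> - \<alpha>))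
        = - c / a1 * w + (2 * of_real pi * \<i> * M + c / a1)"
      unfolding \<alpha>_def using M a1 by (simp add: field_simps)
    also have "\<dots> = - (c / (a1 * w1)) * (w * w1 - w0)"
      unfolding h2 using w1 a1 by (simp add: field_simps)
    finally show ?thesis .
  qed
  show "(- a1 * w1 + a1 * (w * w1)) / (c * (w * w1 - w0))
       = - ((w - 1) / (M * ((\<alpha> + of_real pi * \<i>) * w + (of_real pi * \<i> - \<alpha>))))"
    unfolding D using a1 c w1 by (cases "w * w1 - w0 = 0") (auto simp: field_simps)
  show "\<alpha> \<noteq> - (of_real pi * \<i>)" unfolding \<alpha>_def using a1 c M by simp
  show "\<alpha> \<noteq> of_real pi * \<i> \<or> w0 = 0"
  proof (cases "\<alpha> = of_real pi * \<i>")
    case True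
    hence "- c / (a1 * M) = 2 * of_real pi * \<i>" unfolding \<alpha>_def by (simp add: algebra_simps)
    hence "2 * of_real pi * \<i> * M = - c / a1" using a1 M by (simp add: field_simps)
    hence e: "- (c / a1) * (w1 - w0) / w1 = - c / a1" using h2 by simp
    have "(c / a1) * (w1 - w0) = (c / a1) * w1" using e w1 a1 by (simp add: field_simps)
    hence "w1 - w0 = w1" using a1 c by simp
    thus ?thesis by simp
  qed simp
qed

theorem proposition5p3:
  fixes F :: "complex \<Rightarrow> complex"
  assumes "transcendental_entire F"
    and "class_R1 (newton_map F)"
    and "\<exists>!z0. z0 \<in> strip_S0 \<and> is_pole (newton_map F) z0"
    and "\<forall>z0 \<in> strip_S0. is_pole (newton_map F) z0 \<longrightarrow> zorder (newton_map F) z0 = -1"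
  shows "(\<exists>\<alpha> m. \<alpha> \<noteq> pi * \<i> \<and> \<alpha> \<noteq> - (pi * \<i>) \<and> m \<ge> 1 \<and>
            conformally_conjugate (newton_map F) (newton_map (F_alpha_m \<alpha> m)))
       \<or> (\<exists>\<beta>. \<beta> \<noteq> 0 \<and> conformally_conjugate (newton_map F) (newton_map (F_beta \<beta>)))"
proof -
  define N where "N = newton_map F"
  have holoF: "F holomorphic_on UNIV" using assms(1) by (simp add: transcendental_entire_def)
  obtain p q :: "complex poly" where q0: "q \<noteq> 0" and cop: "coprime p q"
    and q00: "poly q 0 \<noteq> 0" and deg: "degree p \<le> degree q" and ex: "\<exists>w. poly q w = 0"
    and H: "\<forall>\<^sub>\<approx>z. N z = z + poly p (EE z) / poly q (EE z)"
    using assms(2) unfolding class_R1_def N_def by blast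
  define zz where "zz = (\<lambda>w::complex. Ln w / (2 * pi * \<i>))"
  have Ezz: "EE (zz w) = w" if "w \<noteq> 0" for w
    using that by (simp add: zz_def)
  have Szz: "zz w \<in> strip_S0" if "w \<noteq> 0" for w
  proof -
    have "zz w = (- \<i> * Ln w) / of_real (2 * pi)" unfolding zz_def by (simp add: field_simps)
    hence "Re (zz w) = Im (Ln w) / (2 * pi)" by (simp only: Re_divide_of_real) simp
    hence r: "pi * (2 * Re (zz w)) = Im (Ln w)" using pi_gt_zero by (simp add: field_simps)
    have "- pi < Im (Ln w)" "Im (Ln w) \<le> pi" using that mpi_less_Im_Ln Im_Ln_le_pi by auto
    hence "pi * (-1) < pi * (2 * Re (zz w))" "pi * (2 * Re (zz w)) \<le> pi * 1" using r by linarith+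
    hence "-1 < 2 * Re (zz w)" "2 * Re (zz w) \<le> 1"
      using pi_gt_zero mult_less_cancel_left_pos mult_le_cancel_left_pos by blast+
    thus ?thesis unfolding strip_S0_def by simp
  qed
  have evH: "\<forall>\<^sub>F x in at z. N x = x + poly p (EE x) / poly q (EE x)" for z
    using eventually_cosparse_imp_eventually_at[OF H] by simp
  have poleN: "is_pole N (zz w)" if qw: "poly q w = 0" for w
  proof -
    have wnz: "w \<noteq> 0" using qw q00 by auto
    have "is_pole (\<lambda>z. z + poly p (EE z) / poly q (EE z)) (zz w)"
      by (rule pole_lemma) (use q0 qw coprime_root[OF cop qw] Ezz[OF wnz] in auto)
    thus ?thesis using is_pole_cong[OF evH refl] by simp
  qed
  obtain w0 where qw0: "poly q w0 = 0" using ex by blast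
  have w0nz: "w0 \<noteq> 0" using qw0 q00 by auto
  have only: "\<forall>w. poly q w = 0 \<longrightarrow> w = w0"
  proof (intro allI impI)
    fix w assume qw: "poly q w = 0"
    have wnz: "w \<noteq> 0" using qw q00 by auto
    have "zz w = zz w0" using assms(3) poleN[OF qw] poleN[OF qw0] Szz[OF wnz] Szz[OF w0nz]
      unfolding N_def by blast
    hence "EE (zz w) = EE (zz w0)" by simp
    thus "w = w0" using Ezz[OF wnz] Ezz[OF w0nz] by simp
  qed
  obtain c k where c0: "c \<noteq> 0" and k1: "k \<ge> 1" and qck: "q = smult c ([:-w0,1:]^k)"
    using poly_single_root[OF q0 qw0 only] by blast
  have polyq: "poly q x = c * (x - w0) ^ k" for x unfolding qck by (simp add: poly_power algebra_simps)
  have kk: "k = 1"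
  proof -
    have zoN: "zorder N (zz w0) = -1" using assms(4) poleN[OF qw0] Szz[OF w0nz] unfolding N_def by blast
    have ev: "\<forall>\<^sub>F x in at (zz w0). N x = x + poly p (EE x) / (c * (EE x - w0) ^ k)"
      using evH[of "zz w0"] by (simp add: polyq)
    have "zorder (\<lambda>x. x + poly p (EE x) / (c * (EE x - w0) ^ k)) (zz w0) = -1"
      using zorder_cong[OF ev refl] zoN by simp
    moreover have "is_pole (\<lambda>x. x + poly p (EE x) / (c * (EE x - w0) ^ k)) (zz w0)"
      using is_pole_cong[OF ev refl] poleN[OF qw0] by simp
    ultimately show "k = 1"
      by (intro simple_pole_k1[OF c0 k1 _ Ezz[OF w0nz]]) (use coprime_root[OF cop qw0] in auto)
  qed
  have polyq1: "poly q x = c * (x - w0)" for x using polyq kk by simp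
  have "degree q = 1" using qck kk c0 by (simp add: degree_smult_eq)
  define a0 a1 where "a0 = coeff p 0" and "a1 = coeff p 1"
  have polyp: "poly p x = a0 + a1 * x" for x using poly_deg1[of p x] deg \<open>degree q = 1\<close>
    unfolding a0_def a1_def by simp
  have pw0: "a0 + a1 * w0 \<noteq> 0" using coprime_root[OF cop qw0] polyp by simp
  have HL: "\<forall>\<^sub>\<approx>x. N x = x + (a0 + a1 * EE x) / (c * (EE x - w0))"
    using H by (simp add: polyp polyq1)
  have EEadd: "EE (z + b) = EE z * EE b" for z b by (simp add: distrib_left exp_add)
  have EEneg: "EE (- z + b) = EE b / EE z" for z b
  proof -
    have "EE ((- z + b) + z) = EE (- z + b) * EE z" by (rule EEadd)
    thus ?thesis by (simp add: eq_divide_eq)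
  qed
  show ?thesis
  proof (cases "a1 = 0")
    case True
    hence a0: "a0 \<noteq> 0" using pw0 by simp
    define \<beta> where "\<beta> = - a0 / (c * w0)"
    define b where "b = zz (- w0)"
    have Eb: "EE b = - w0" using Ezz w0nz b_def by simp
    have bnz: "\<beta> \<noteq> 0" using a0 c0 w0nz by (simp add: \<beta>_def)
    have "\<forall>\<^sub>\<approx>z. N (1 * z + b) = 1 * newton_map (F_beta \<beta>) z + b"
      using cosparse_affine[OF one_neq_zero HL, of b]
    proof (rule eventually_mono)
      fix z assume "N (1 * z + b) = (1 * z + b) + (a0 + a1 * EE (1 * z + b)) / (c * (EE (1 * z + b) - w0))"
      hence "N (z + b) = z + b + (a0 + a1 * (EE z * EE b)) / (c * (EE z * EE b - w0))"
        by (simp only: mult_1_left EEadd)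
      hence e: "N (z + b) = z + b + a0 / (c * (EE z * (- w0) - w0))"
        unfolding True Eb by simp
      have "a0 / (c * (EE z * (- w0) - w0)) = \<beta> / (1 + EE z)"
        unfolding \<beta>_def by (rule alg_b1[OF c0 w0nz])
      thus "N (1 * z + b) = 1 * newton_map (F_beta \<beta>) z + b"
        using e newton_Fbeta[OF bnz, of z] by simp
    qed
    hence "conformally_conjugate N (newton_map (F_beta \<beta>))"
      unfolding conformally_conjugate_def by (intro exI[of _ 1] exI[of _ b]) simp
    thus ?thesis using bnz unfolding N_def by blast
  next
    case a1: False
    show ?thesis
    proof (cases "a0 = 0")
      case True
      define \<beta> where "\<beta> = - a1 / c"
      define b where "b = zz (- w0)"
      have Eb: "EE b = - w0" using Ezz w0nz b_def by simp
      have bnz: "\<beta> \<noteq> 0" using a1 c0 by (simp add: \<beta>_def)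
      have "\<forall>\<^sub>\<approx>z. N ((-1) * z + b) = (-1) * newton_map (F_beta \<beta>) z + b"
        using cosparse_affine[of "-1" _ b, OF _ HL]
      proof (rule eventually_mono)
        fix z assume "N ((-1) * z + b) = ((-1) * z + b) + (a0 + a1 * EE ((-1) * z + b)) / (c * (EE ((-1) * z + b) - w0))"
        hence "N (- z + b) = - z + b + (a0 + a1 * (EE b / EE z)) / (c * (EE b / EE z - w0))"
          by (simp only: mult_minus1 EEneg)
        hence e: "N (- z + b) = - z + b + a1 * (- w0 / EE z) / (c * (- w0 / EE z - w0))"
          unfolding True Eb by simp
        have Enz: "EE z \<noteq> 0" by simp
        have "a1 * (- w0 / EE z) / (c * (- w0 / EE z - w0)) = - (\<beta> / (1 + EE z))"
          unfolding \<beta>_def by (rule alg_b2[OF c0 w0nz Enz])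
        thus "N ((-1) * z + b) = (-1) * newton_map (F_beta \<beta>) z + b"
          using e newton_Fbeta[OF bnz, of z] by simp
      qed simp
      hence "conformally_conjugate N (newton_map (F_beta \<beta>))"
        unfolding conformally_conjugate_def by (intro exI[of _ "-1"] exI[of _ b]) simp
      thus ?thesis using bnz unfolding N_def by blast
    next
      case a0: False
      define w1 where "w1 = - a0 / a1"
      have w1nz: "w1 \<noteq> 0" using a0 a1 by (simp add: w1_def)
      have a0w1: "a0 = - a1 * w1" using a1 by (simp add: w1_def)
      have pfac: "a0 + a1 * x = a1 * (x - w1)" for x using a0w1 by (simp add: algebra_simps)
      have w10: "w1 \<noteq> w0" using pw0 pfac[of w0] by auto
      define z1 where "z1 = zz w1"
      have Ez1: "EE z1 = w1" using Ezz w1nz z1_def by simp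
      define L where "L = (\<lambda>x. (a0 + a1 * EE x) / (c * (EE x - w0)))"
      have ev1: "\<forall>\<^sub>F x in at z1. N x = x + L x"
        using eventually_cosparse_imp_eventually_at[OF HL] unfolding L_def by simp
      have ev2: "\<forall>\<^sub>F x in at z1. EE x \<noteq> w1" by (rule E_ev_neq)
      have ev3: "\<forall>\<^sub>F x in at z1. EE x \<noteq> w0" by (rule E_ev_neq)
      have ev4: "\<forall>\<^sub>F x in at z1. F x \<noteq> 0 \<and>
          (x - z1) * deriv F x / F x = - (c / a1) * (EE x - w0) * ((x - z1) / (EE x - w1))"
        using ev1 ev2 ev3
      proof eventually_elim
        case (elim x)
        have NF: "N x = x - F x / deriv F x" unfolding N_def newton_map_def by simp
        have "- (F x / deriv F x) = L x" using elim(1) NF by simp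
        hence FF: "F x / deriv F x = - L x" by (metis minus_minus)
        have Lnz: "L x \<noteq> 0" using elim(2,3) a1 c0 by (simp add: L_def pfac)
        have Fnz: "F x \<noteq> 0" using FF Lnz by auto
        have "deriv F x / F x = inverse (F x / deriv F x)" by simp
        also have "\<dots> = - (c * (EE x - w0)) / (a1 * (EE x - w1))"
          unfolding FF L_def pfac by (simp add: inverse_eq_divide)
        finally have dd: "deriv F x / F x = - (c * (EE x - w0)) / (a1 * (EE x - w1))" .
        have "(x - z1) * deriv F x / F x = (x - z1) * (deriv F x / F x)"
          by (simp only: times_divide_eq_right)
        also have "\<dots> = (x - z1) * (- (c * (EE x - w0)) / (a1 * (EE x - w1)))"
          by (simp only: dd)
        also have "\<dots> = - (c / a1) * (EE x - w0) * ((x - z1) / (EE x - w1))"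
          by (rule aux_q) (use a1 elim(2) in auto)
        finally show ?case using Fnz by simp
      qed
      have "\<exists>w. F w \<noteq> 0" using eventually_happens'[OF at_neq_bot ev4] by blast
      then obtain n where tn: "((\<lambda>x. (x - z1) * deriv F x / F x) \<longlongrightarrow> of_nat n) (at z1)"
        using log_deriv_limit[OF holoF] by blast
      define \<rho> where "\<rho> = - (c / a1) * (w1 - w0) * (1 / (2 * pi * \<i> * w1))"
      have tA: "((\<lambda>x. EE x - w0) \<longlongrightarrow> w1 - w0) (at z1)"
        using E_tendsto[of z1] Ez1 by (auto intro: tendsto_diff)
      have tB: "((\<lambda>x. (x - z1) / (EE x - w1)) \<longlongrightarrow> 1 / (2 * pi * \<i> * w1)) (at z1)"
        using E_quot_tendsto[of z1] unfolding Ez1 .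
      have tr: "((\<lambda>x. - (c / a1) * (EE x - w0) * ((x - z1) / (EE x - w1))) \<longlongrightarrow> \<rho>) (at z1)"
        unfolding \<rho>_def by (intro tendsto_mult tendsto_const tA tB)
      have tn': "((\<lambda>x. (x - z1) * deriv F x / F x) \<longlongrightarrow> \<rho>) (at z1)"
        using tr tendsto_cong[OF eventually_mono[OF ev4]] by (smt (verit))
      have nr: "of_nat n = \<rho>" using tendsto_unique[OF at_neq_bot tn tn'] .
      have rnz: "\<rho> \<noteq> 0" using c0 a1 w10 w1nz by (simp add: \<rho>_def)
      have Mnz: "(of_nat n :: complex) \<noteq> 0" using nr rnz by simp
      hence n1: "n \<ge> 1" by (cases n) auto
      define \<alpha> where "\<alpha> = - c / (a1 * of_nat n) - of_real pi * \<i>"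
      have hM: "(of_nat n :: complex) = - (c / a1) * (w1 - w0) * (1 / (2 * pi * \<i> * w1))"
        using nr unfolding \<rho>_def .
      note A = alg_i[OF a1 c0 w1nz Mnz hM, folded \<alpha>_def]
      have "\<forall>\<^sub>\<approx>z. N (1 * z + z1) = 1 * newton_map (F_alpha_m \<alpha> n) z + z1"
        using cosparse_affine[OF one_neq_zero HL, of z1]
      proof (rule eventually_mono)
        fix z assume "N (1 * z + z1) = (1 * z + z1) + (a0 + a1 * EE (1 * z + z1)) / (c * (EE (1 * z + z1) - w0))"
        hence "N (z + z1) = z + z1 + (a0 + a1 * (EE z * EE z1)) / (c * (EE z * EE z1 - w0))"
          by (simp only: mult_1_left EEadd)
        hence e: "N (z + z1) = z + z1 + (- a1 * w1 + a1 * (EE z * w1)) / (c * (EE z * w1 - w0))"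
          unfolding a0w1 Ez1 .
        show "N (1 * z + z1) = 1 * newton_map (F_alpha_m \<alpha> n) z + z1"
          using e A(1)[of "EE z"] newton_Falpha[OF n1, of \<alpha> z] by simp
      qed
      hence "conformally_conjugate N (newton_map (F_alpha_m \<alpha> n))"
        unfolding conformally_conjugate_def by (intro exI[of _ 1] exI[of _ z1]) simp
      moreover have "\<alpha> \<noteq> pi * \<i>" using A(2) w0nz by simp
      moreover have "\<alpha> \<noteq> - (pi * \<i>)" using A(3) by simp
      ultimately show ?thesis using n1 unfolding N_def by blast
    qed
  qed
qed

end
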